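(* Assume the standing assumptions in the context. Let $S\subseteq S^*$, $i\in[d]\setminus S$, $n\ge2$, and let $\beta\in\mathbb{R}^d$ be deterministic with $\mathrm{supp}(\beta)\subseteq S$ and $\|\beta\|_2\le 2/\sqrt\rho$. Let $(X_j,Y_j)_{j\in[n]}$ be i.i.d. copies of $(x,y)$, $U_j=|X_{j,i}(X_j^\top\beta-Y_j)|$, and $\tilde V_{i,n}=\frac{1}{n(n-1)}\sum_{1\le l<j\le n}(U_j-U_l)^2$. Then $$\mathbb{E}[\tilde V_{i,n}]\le 20\frac{LM^2}{\rho}.$$
   Context: Standing assumptions: $(x,y)$ random with $x\in\mathbb{R}^d$, $y\in\mathbb{R}$; $\mathbb{E}[x]=0$; $y=\langle\beta^*,x\rangle+\epsilon$ with $\mathbb{E}[\epsilon\mid x]=0$; $S^*=\mathrm{supp}(\beta^* )$, $s^*=|S^*|$; $\Sigma$ the covariance of $x$, $\Sigma_F$ its principal submatrix on $F$; there are $0<\rho\le L$ with all eigenvalues of $\Sigma_F$ in $[\rho,L]$ for all $|F|=s^*$; $|y|<1$ and $\|x\|_\infty<M$ almost surely. $X_{j,i}$ is the $i$-th coordinate of $X_j$. *)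

theory Defs
  imports "HOL-Probability.Probability" "Jordan_Normal_Form.Char_Poly"
begin

text \<open>Vectors of R^d are represented as functions nat => real; only coordinates k < d matter.\<close>

definition supp :: "nat \<Rightarrow> (nat \<Rightarrow> real) \<Rightarrow> nat set" where
  "supp d b = {k. k < d \<and> b k \<noteq> 0}"

definition ip :: "nat \<Rightarrow> (nat \<Rightarrow> real) \<Rightarrow> (nat \<Rightarrow> real) \<Rightarrow> real" where
  "ip d b v = (\<Sum>k<d. b k * v k)"

definition norm2 :: "nat \<Rightarrow> (nat \<Rightarrow> real) \<Rightarrow> real" where
  "norm2 d b = sqrt (\<Sum>k<d. (b k)\<^sup>2)"

definition obs_space :: "nat \<Rightarrow> ((nat \<Rightarrow> real) \<times> real) measure" where
  "obs_space d = (PiM {..<d} (\<lambda>_. borel)) \<Otimes>\<^sub>M borel"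

definition sigma_x :: "nat \<Rightarrow> ((nat \<Rightarrow> real) \<times> real) measure \<Rightarrow> ((nat \<Rightarrow> real) \<times> real) measure" where
  "sigma_x d D = vimage_algebra (space D) fst (PiM {..<d} (\<lambda>_. borel))"

text \<open>Covariance matrix of x (x is centred), entries Sigma_{a,b} = E[x_a x_b].\<close>
definition Cov :: "((nat \<Rightarrow> real) \<times> real) measure \<Rightarrow> nat \<Rightarrow> nat \<Rightarrow> real" where
  "Cov D a b = (\<integral>z. fst z a * fst z b \<partial>D)"

definition Cov_sub :: "((nat \<Rightarrow> real) \<times> real) measure \<Rightarrow> nat set \<Rightarrow> real mat" where
  "Cov_sub D F = (let es = sorted_list_of_set F in
     mat (card F) (card F) (\<lambda>(a, b). Cov D (es ! a) (es ! b)))"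

text \<open>U_j for a sample omega (omega j = (X_j, Y_j)).\<close>
definition Ustat :: "nat \<Rightarrow> nat \<Rightarrow> (nat \<Rightarrow> real) \<Rightarrow> (nat \<Rightarrow> (nat \<Rightarrow> real) \<times> real) \<Rightarrow> nat \<Rightarrow> real" where
  "Ustat d i b \<omega> j = \<bar>fst (\<omega> j) i * (ip d b (fst (\<omega> j)) - snd (\<omega> j))\<bar>"

definition Vtilde :: "nat \<Rightarrow> nat \<Rightarrow> nat \<Rightarrow> (nat \<Rightarrow> real) \<Rightarrow> (nat \<Rightarrow> (nat \<Rightarrow> real) \<times> real) \<Rightarrow> real" where
  "Vtilde n d i b \<omega> = 1 / (real n * (real n - 1)) *
     (\<Sum>j<n. \<Sum>l<j. (Ustat d i b \<omega> j - Ustat d i b \<omega> l)\<^sup>2)"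

end

theory Submission
  imports Defs "HOL-Analysis.Analysis"
begin


definition Bf :: "nat \<Rightarrow> (nat \<Rightarrow> nat \<Rightarrow> real) \<Rightarrow> (nat \<Rightarrow> real) \<Rightarrow> (nat \<Rightarrow> real) \<Rightarrow> real" where
  "Bf m A u v = (\<Sum>a<m. \<Sum>b<m. u a * A a b * v b)"

definition N2 :: "nat \<Rightarrow> (nat \<Rightarrow> real) \<Rightarrow> (nat \<Rightarrow> real) \<Rightarrow> real" where
  "N2 m u v = (\<Sum>a<m. u a * v a)"

lemma Bf_add: "Bf m A (\<lambda>k. v k + t * u k) (\<lambda>k. v k + t * u k) =
   Bf m A v v + t * Bf m A u v + t * Bf m A v u + t^2 * Bf m A u u"
  unfolding Bf_def by (simp add: algebra_simps power2_eq_square sum.distrib sum_distrib_left)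

lemma N2_add: "N2 m (\<lambda>k. v k + t * u k) (\<lambda>k. v k + t * u k) =
   N2 m v v + 2 * t * N2 m u v + t^2 * N2 m u u"
  unfolding N2_def by (simp add: algebra_simps power2_eq_square sum.distrib sum_distrib_left)

lemma Bf_sym: "(\<And>a b. a < m \<Longrightarrow> b < m \<Longrightarrow> A a b = A b a) \<Longrightarrow> Bf m A v u = Bf m A u v"
  unfolding Bf_def
  apply (subst sum.swap)
  by (auto intro!: sum.cong simp: mult.commute mult.left_commute)

lemma Bf_scale: "Bf m A (\<lambda>k. c * u k) (\<lambda>k. c * u k) = c^2 * Bf m A u u"
  unfolding Bf_def by (simp add: sum_distrib_left algebra_simps power2_eq_square)

lemma N2_scale: "N2 m (\<lambda>k. c * u k) (\<lambda>k. c * u k) = c^2 * N2 m u u"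
  unfolding N2_def by (simp add: sum_distrib_left algebra_simps power2_eq_square)

lemma quad_nonpos_lin0:
  fixes c e :: real
  assumes "\<forall>t. 2 * t * c + t^2 * e \<le> 0"
  shows "c = 0"
proof (rule ccontr)
  assume c0: "c \<noteq> 0"
  define E where "E = \<bar>e\<bar> + 1"
  have E0: "E > 0" unfolding E_def by simp
  define u where "u = c / E"
  have cu: "c = u * E" unfolding u_def using E0 by simp
  have u0: "u \<noteq> 0" using c0 cu by auto
  have "u^2 * (-\<bar>e\<bar>) \<le> u^2 * e" by (rule mult_left_mono) auto
  then have h1: "2 * u * c + u^2 * e \<ge> 2 * u * c - u^2 * \<bar>e\<bar>" by simp
  have h2: "2 * u * c - u^2 * \<bar>e\<bar> = u^2 * (E + 1)"
    unfolding cu E_def by (simp add: algebra_simps power2_eq_square)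
  have h3: "u^2 * (E + 1) > 0" using u0 E0 by simp
  have "2 * u * c + u^2 * e \<le> 0" using assms by blast
  then show False using h1 h2 h3 by linarith
qed

lemma N2_nonneg: "N2 m u u \<ge> 0" unfolding N2_def by (auto intro: sum_nonneg)

lemma N2_zero: "N2 m u u = 0 \<Longrightarrow> a < m \<Longrightarrow> u a = 0"
  unfolding N2_def by (subst (asm) sum_nonneg_eq_0_iff) auto

lemma Bf_zero: "(\<And>a. a < m \<Longrightarrow> u a = 0) \<Longrightarrow> Bf m A u u = 0"
  unfolding Bf_def by simp

lemma rayleigh:
  fixes A :: "nat \<Rightarrow> nat \<Rightarrow> real" and L :: real
  assumes sym: "\<And>a b. a < m \<Longrightarrow> b < m \<Longrightarrow> A a b = A b a"
    and ev: "\<And>lam v. (\<exists>k<m. v k \<noteq> 0) \<Longrightarrow> (\<forall>a<m. (\<Sum>b<m. A a b * v b) = lam * v a) \<Longrightarrow> lam \<le> L"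
  shows "Bf m A w w \<le> L * N2 m w w"
proof (cases "m = 0")
  case True then show ?thesis by (simp add: Bf_def N2_def)
next
  case False
  define S where "S = (\<lambda>k::nat. if k < m then {-1..1::real} else {0})"
  define K where "K = Pi UNIV S \<inter> {v. N2 m v v = 1}"
  have cPi: "compact (Pi UNIV S)"
  proof -
    have "compactin (product_topology (\<lambda>_. euclidean) UNIV) (PiE UNIV S)"
      by (subst compactin_PiE) (auto simp: S_def)
    then show ?thesis by (simp add: euclidean_product_topology PiE_UNIV_domain)
  qed
  have contN: "continuous_on UNIV (\<lambda>v::nat\<Rightarrow>real. N2 m v v)"
    unfolding N2_def by (intro continuous_intros continuous_on_product_then_coordinatewise continuous_on_id)
  have contB: "continuous_on UNIV (\<lambda>v::nat\<Rightarrow>real. Bf m A v v)"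
    unfolding Bf_def by (intro continuous_intros continuous_on_product_then_coordinatewise continuous_on_id)
  have "closed {v::nat\<Rightarrow>real. N2 m v v = 1}"
    using contN by (intro closed_Collect_eq) (auto intro: continuous_intros)
  then have cK: "compact K" unfolding K_def using cPi compact_Int_closed by blast
  have "(\<lambda>k. if k = 0 then 1 else 0 :: real) \<in> K"
    using False unfolding K_def S_def N2_def by (auto simp: if_distrib sum.delta cong: if_cong)
  then have neK: "K \<noteq> {}" by auto
  obtain v0 where v0K: "v0 \<in> K" and v0max: "\<And>v. v \<in> K \<Longrightarrow> Bf m A v v \<le> Bf m A v0 v0"
    using continuous_attains_sup[OF cK neK continuous_on_subset[OF contB]] by auto
  define lam where "lam = Bf m A v0 v0"
  have nv0: "N2 m v0 v0 = 1" using v0K unfolding K_def by auto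
  have hom: "Bf m A u u \<le> lam * N2 m u u" for u
  proof (cases "N2 m u u = 0")
    case True
    then have "Bf m A u u = 0" using N2_zero Bf_zero by metis
    then show ?thesis using True by simp
  next
    case F: False
    have np: "N2 m u u > 0" using F N2_nonneg[of m u] by simp
    define c where "c = 1 / sqrt (N2 m u u)"
    define u' where "u' = (\<lambda>k. if k < m then c * u k else 0)"
    have "N2 m u' u' = N2 m (\<lambda>k. c * u k) (\<lambda>k. c * u k)"
      unfolding N2_def u'_def by simp
    also have "\<dots> = 1" using np unfolding N2_scale by (simp add: c_def power_divide)
    finally have nu': "N2 m u' u' = 1" .
    have "u' \<in> Pi UNIV S"
    proof
      fix k
      show "u' k \<in> S k"
      proof (cases "k < m")
        case True
        have "(u' k)^2 \<le> N2 m u' u'"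
          unfolding N2_def using True
          using member_le_sum[of k "{..<m}" "\<lambda>a. u' a * u' a"] by (auto simp: power2_eq_square)
        then have "\<bar>u' k\<bar> \<le> 1" using nu' by (simp add: abs_square_le_1)
        then show ?thesis using True by (simp add: S_def abs_le_iff)
      qed (auto simp: S_def u'_def)
    qed
    then have "u' \<in> K" using nu' unfolding K_def by auto
    then have le: "Bf m A u' u' \<le> lam" using v0max lam_def by auto
    have "Bf m A u' u' = Bf m A (\<lambda>k. c * u k) (\<lambda>k. c * u k)"
      unfolding Bf_def u'_def by simp
    also have "\<dots> = Bf m A u u / N2 m u u" using np unfolding Bf_scale by (simp add: c_def power_divide)
    finally show ?thesis using le np by (simp add: divide_le_eq mult.commute)
  qed
  have crit: "Bf m A u v0 = lam * N2 m u v0" for u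
  proof -
    have "\<forall>t. 2 * t * (Bf m A u v0 - lam * N2 m u v0) + t^2 * (Bf m A u u - lam * N2 m u u) \<le> 0"
    proof
      fix t
      have "Bf m A (\<lambda>k. v0 k + t * u k) (\<lambda>k. v0 k + t * u k) \<le> lam * N2 m (\<lambda>k. v0 k + t * u k) (\<lambda>k. v0 k + t * u k)"
        by (rule hom)
      then show "2 * t * (Bf m A u v0 - lam * N2 m u v0) + t^2 * (Bf m A u u - lam * N2 m u u) \<le> 0"
        unfolding Bf_add N2_add nv0 lam_def[symmetric] using Bf_sym[where v=v0 and u=u, OF sym]
        by (simp add: algebra_simps)
    qed
    then show ?thesis using quad_nonpos_lin0 by fastforce
  qed
  have eigen: "\<forall>a<m. (\<Sum>b<m. A a b * v0 b) = lam * v0 a"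
  proof (intro allI impI)
    fix a assume a: "a < m"
    have "Bf m A (\<lambda>k. if k = a then 1 else 0) v0 = (\<Sum>aa<m. if aa = a then (\<Sum>b<m. A aa b * v0 b) else 0)"
      unfolding Bf_def by (rule sum.cong) auto
    also have "\<dots> = (\<Sum>b<m. A a b * v0 b)" using a by (simp add: sum.delta)
    finally have "Bf m A (\<lambda>k. if k = a then 1 else 0) v0 = (\<Sum>b<m. A a b * v0 b)" .
    moreover have "N2 m (\<lambda>k. if k = a then 1 else 0) v0 = (\<Sum>aa<m. if aa = a then v0 aa else 0)"
      unfolding N2_def by (rule sum.cong) auto
    moreover have "(\<Sum>aa<m. if aa = a then v0 aa else 0) = v0 a" using a by (simp add: sum.delta)
    ultimately show "(\<Sum>b<m. A a b * v0 b) = lam * v0 a" using crit by metis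
  qed
  have "\<exists>k<m. v0 k \<noteq> 0"
  proof (rule ccontr)
    assume "\<not> ?thesis"
    then have "N2 m v0 v0 = 0" unfolding N2_def by simp
    then show False using nv0 by simp
  qed
  then have "lam \<le> L" using ev eigen by blast
  then show ?thesis using hom[of w] N2_nonneg[of m w] by (meson mult_right_mono order_trans)
qed


lemma comp_PiM:
  fixes h :: "'a \<Rightarrow> real"
  assumes D: "prob_space D" and h: "h \<in> borel_measurable D" and j: "j \<in> I"
  shows "integrable (PiM I (\<lambda>_. D)) (\<lambda>\<omega>. h (\<omega> j)) = integrable D h"
    and "(\<integral>\<omega>. h (\<omega> j) \<partial>PiM I (\<lambda>_. D)) = integral\<^sup>L D h"
proof -
  have dd: "distr (PiM I (\<lambda>_. D)) D (\<lambda>\<omega>. \<omega> j) = D"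
    using distr_PiM_component[of I "\<lambda>_. D" j] D j by simp
  have m: "(\<lambda>\<omega>. \<omega> j) \<in> measurable (PiM I (\<lambda>_. D)) D"
    using measurable_component_singleton[OF j, of "\<lambda>_. D"] by simp
  show "integrable (PiM I (\<lambda>_. D)) (\<lambda>\<omega>. h (\<omega> j)) = integrable D h"
    using integrable_distr_eq[OF m h] dd by simp
  show "(\<integral>\<omega>. h (\<omega> j) \<partial>PiM I (\<lambda>_. D)) = integral\<^sup>L D h"
    using integral_distr[OF m h] dd by simp
qed

lemma sq_le2: "(a - b)^2 \<le> 2 * a^2 + 2 * (b::real)^2"
proof -
  have "(2*a^2+2*b^2) - (a-b)^2 = (a+b)^2" by (simp add: power2_eq_square algebra_simps)
  moreover have "0 \<le> (a+b)^2" by simp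
  ultimately show ?thesis by linarith
qed

lemma sum_nat_real: "(\<Sum>j<n. real j) = real n * (real n - 1) / 2"
  by (induction n) (auto simp: field_simps)

theorem mainTheorem6:
  fixes D :: "((nat \<Rightarrow> real) \<times> real) measure"
    and d n i :: nat and \<beta>s \<beta> :: "nat \<Rightarrow> real" and \<rho> L M :: real and S :: "nat set"
  assumes prob: "prob_space D"
    and sets_D: "sets D = sets (obs_space d)"
    and mean_zero: "\<forall>k<d. (\<integral>z. fst z k \<partial>D) = 0"
    and noise: "AE z in D. real_cond_exp D (sigma_x d D) (\<lambda>z. snd z - ip d \<beta>s (fst z)) z = 0"
    and rho_pos: "0 < \<rho>" and rho_L: "\<rho> \<le> L"
    and eig: "\<forall>F. F \<subseteq> {..<d} \<and> card F = card (supp d \<beta>s) \<longrightarrow>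
               (\<forall>k. eigenvalue (Cov_sub D F) k \<longrightarrow> \<rho> \<le> k \<and> k \<le> L)"
    and y_bd: "AE z in D. \<bar>snd z\<bar> < 1"
    and x_bd: "AE z in D. \<forall>k<d. \<bar>fst z k\<bar> < M"
    and S_sub: "S \<subseteq> supp d \<beta>s"
    and i_d: "i < d" and i_S: "i \<notin> S"
    and n2: "n \<ge> 2"
    and supp_beta: "supp d \<beta> \<subseteq> S"
    and beta_norm: "norm2 d \<beta> \<le> 2 / sqrt \<rho>"
  shows "(\<integral>\<omega>. Vtilde n d i \<beta> \<omega> \<partial>(PiM {..<n} (\<lambda>_. D))) \<le> 20 * L * M\<^sup>2 / \<rho>"
  

proof -
  interpret D: prob_space D by (rule prob)
  have mD: "measurable D N = measurable (obs_space d) N" for N :: "'z measure"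
    by (rule measurable_cong_sets[OF sets_D refl])
  have meas_x: "(\<lambda>z. fst z k) \<in> borel_measurable D" if "k < d" for k
  proof -
    have "fst \<in> measurable D (PiM {..<d} (\<lambda>_. borel))"
      unfolding mD obs_space_def by (rule measurable_fst)
    then show ?thesis
      using measurable_compose[OF _ measurable_component_singleton[of k "{..<d}" "\<lambda>_. borel"]] that
      by auto
  qed
  have meas_y: "snd \<in> borel_measurable D"
    unfolding mD obs_space_def by (rule measurable_snd)
  have meas_ip: "(\<lambda>z. ip d b (fst z)) \<in> borel_measurable D" for b
    unfolding ip_def by (intro borel_measurable_sum borel_measurable_times borel_measurable_const meas_x) auto
  define g where "g = (\<lambda>z. \<bar>fst z i * (ip d \<beta> (fst z) - snd z)\<bar>)"
  have meas_g: "g \<in> borel_measurable D"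
    unfolding g_def by (intro borel_measurable_abs borel_measurable_times borel_measurable_diff meas_x meas_ip meas_y i_d)
  define Bb where "Bb = (\<Sum>k<d. \<bar>\<beta> k\<bar>) * M"
  have ip_bd: "\<bar>ip d \<beta> (fst z)\<bar> \<le> Bb" if "\<forall>k<d. \<bar>fst z k\<bar> < M" for z
  proof -
    have "\<bar>ip d \<beta> (fst z)\<bar> \<le> (\<Sum>k<d. \<bar>\<beta> k * fst z k\<bar>)" unfolding ip_def by (rule sum_abs)
    also have "\<dots> \<le> (\<Sum>k<d. \<bar>\<beta> k\<bar> * M)"
    proof (intro sum_mono)
      fix k assume "k \<in> {..<d}"
      then have "\<bar>fst z k\<bar> \<le> M" using that by (auto intro: less_imp_le)
      then show "\<bar>\<beta> k * fst z k\<bar> \<le> \<bar>\<beta> k\<bar> * M" by (simp add: abs_mult mult_left_mono)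
    qed
    finally show ?thesis by (simp add: Bb_def sum_distrib_right)
  qed
  have AEb: "AE z in D. (\<forall>k<d. \<bar>fst z k\<bar> < M) \<and> \<bar>snd z\<bar> < 1"
    using x_bd y_bd by auto
  have M0: "M > 0"
  proof -
    have "AE z in D. \<bar>fst z i\<bar> < M" using x_bd i_d by auto
    then have "AE z in D. 0 < M" by eventually_elim auto
    then show ?thesis using D.AE_const by simp
  qed
  have int_g2: "integrable D (\<lambda>z. (g z)^2)"
  proof (rule D.integrable_const_bound[where B="(M * (Bb + 1))^2"])
    show "AE z in D. norm ((g z)^2) \<le> (M * (Bb + 1))^2"
      using AEb
    proof eventually_elim
      case (elim z)
      have "\<bar>ip d \<beta> (fst z) - snd z\<bar> \<le> Bb + 1" using ip_bd[of z] elim abs_triangle_ineq4[of "ip d \<beta> (fst z)" "snd z"]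
        by (smt (verit))
      moreover have "\<bar>fst z i\<bar> \<le> M" using elim i_d by (auto intro: less_imp_le)
      ultimately have "g z \<le> M * (Bb + 1)"
        unfolding g_def abs_mult by (intro mult_mono) auto
      moreover have "0 \<le> g z" by (simp add: g_def)
      ultimately show ?case by (simp add: power_mono)
    qed
  qed (use meas_g in auto)
  have int_ip2: "integrable D (\<lambda>z. (ip d \<beta> (fst z))^2)"
  proof (rule D.integrable_const_bound[where B="Bb^2"])
    show "AE z in D. norm ((ip d \<beta> (fst z))^2) \<le> Bb^2"
      using AEb
    proof eventually_elim
      case (elim z)
      have "\<bar>ip d \<beta> (fst z)\<bar> \<le> Bb" using ip_bd[of z] elim by blast
      then have "\<bar>ip d \<beta> (fst z)\<bar>^2 \<le> Bb^2" by (intro power_mono) auto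
      then show ?case by simp
    qed
  qed (use meas_ip in auto)
  have int_y2: "integrable D (\<lambda>z. (snd z)^2)"
  proof (rule D.integrable_const_bound[where B="1"])
    show "AE z in D. norm ((snd z)^2) \<le> 1"
      using AEb
    proof eventually_elim
      case (elim z)
      then show ?case by (simp add: abs_square_le_1)
    qed
  qed (use meas_y in auto)
  have int_xx: "integrable D (\<lambda>z. fst z a * fst z b)" if "a < d" "b < d" for a b
  proof (rule D.integrable_const_bound[where B="M * M"])
    show "AE z in D. norm (fst z a * fst z b) \<le> M * M"
      using AEb
    proof eventually_elim
      case (elim z)
      then have "\<bar>fst z a\<bar> \<le> M" "\<bar>fst z b\<bar> \<le> M" using that by (auto intro: less_imp_le)
      then have "\<bar>fst z a\<bar> * \<bar>fst z b\<bar> \<le> M * M" by (intro mult_mono) auto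
      then show ?case by (simp add: abs_mult)
    qed
  qed (use meas_x that in auto)
  define E2 where "E2 = (\<integral>z. (g z)^2 \<partial>D)"
  define Q where "Q = (\<Sum>a<d. \<Sum>b<d. \<beta> a * \<beta> b * Cov D a b)"
  have ip2_eq: "(\<integral>z. (ip d \<beta> (fst z))^2 \<partial>D) = Q"
  proof -
    have eqf: "(\<lambda>z. (ip d \<beta> (fst z))^2) = (\<lambda>z. \<Sum>a<d. \<Sum>b<d. \<beta> a * \<beta> b * (fst z a * fst z b))"
      unfolding ip_def power2_eq_square by (auto simp: sum_product algebra_simps)
    then have "(\<integral>z. (ip d \<beta> (fst z))^2 \<partial>D) = (\<Sum>a<d. \<Sum>b<d. \<integral>z. \<beta> a * \<beta> b * (fst z a * fst z b) \<partial>D)"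
    proof -
      have ii: "integrable D (\<lambda>z. \<beta> a * \<beta> b * (fst z a * fst z b))" if "a < d" "b < d" for a b
        using int_xx[OF that] by simp
      have "(\<integral>z. (\<Sum>a<d. \<Sum>b<d. \<beta> a * \<beta> b * (fst z a * fst z b)) \<partial>D)
          = (\<Sum>a<d. \<integral>z. (\<Sum>b<d. \<beta> a * \<beta> b * (fst z a * fst z b)) \<partial>D)"
        by (rule Bochner_Integration.integral_sum[where f="\<lambda>a (z::(nat\<Rightarrow>real)\<times>real). \<Sum>b<d. \<beta> a * \<beta> b * (fst z a * fst z b)"]) (use ii in \<open>auto intro!: integrable_sum\<close>)
      also have "\<dots> = (\<Sum>a<d. \<Sum>b<d. \<integral>z. \<beta> a * \<beta> b * (fst z a * fst z b) \<partial>D)"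
      proof (rule sum.cong[OF refl])
        fix a assume aa: "a \<in> {..<d}"
        show "(\<integral>z. (\<Sum>b<d. \<beta> a * \<beta> b * (fst z a * fst z b)) \<partial>D) = (\<Sum>b<d. \<integral>z. \<beta> a * \<beta> b * (fst z a * fst z b) \<partial>D)"
          by (rule Bochner_Integration.integral_sum[where f="\<lambda>b (z::(nat\<Rightarrow>real)\<times>real). \<beta> a * \<beta> b * (fst z a * fst z b)"]) (use ii aa in auto)
      qed
      finally show ?thesis unfolding eqf .
    qed
    also have "\<dots> = Q" unfolding Q_def Cov_def by simp
    finally show ?thesis .
  qed
  define F where "F = supp d \<beta>s"
  define es where "es = sorted_list_of_set F"
  define m where "m = card F"
  have Fd: "F \<subseteq> {..<d}" unfolding F_def supp_def by auto
  have finF: "finite F" using Fd finite_subset by blast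
  have es: "distinct es" "set es = F" "length es = m"
    unfolding es_def m_def using finF by auto
  have bij: "bij_betw ((!) es) {..<m} F" using bij_betw_nth[of es "{..<m}" F] es by simp
  have beta0: "\<beta> k = 0" if "k < d" "k \<notin> F" for k
    using that supp_beta S_sub unfolding F_def supp_def by auto
  have sumF: "(\<Sum>a<d. f a) = (\<Sum>p<m. f (es ! p))" if "\<And>a. a < d \<Longrightarrow> a \<notin> F \<Longrightarrow> f a = 0" for f :: "nat \<Rightarrow> real"
  proof -
    have "(\<Sum>a<d. f a) = (\<Sum>a\<in>F. f a)"
      by (rule sum.mono_neutral_right) (use Fd that in auto)
    also have "\<dots> = (\<Sum>p<m. f (es ! p))"
      using sum.reindex_bij_betw[OF bij, of f] by simp
    finally show ?thesis .
  qed
  define A where "A = (\<lambda>p q. Cov D (es ! p) (es ! q))"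
  define w where "w = (\<lambda>p. \<beta> (es ! p))"
  have QB: "Q = Bf m A w w"
  proof -
    have "Q = (\<Sum>p<m. \<Sum>b<d. \<beta> (es ! p) * \<beta> b * Cov D (es ! p) b)"
      unfolding Q_def by (rule sumF) (simp add: beta0)
    also have "\<dots> = (\<Sum>p<m. \<Sum>q<m. \<beta> (es ! p) * \<beta> (es ! q) * Cov D (es ! p) (es ! q))"
      by (intro sum.cong refl sumF) (simp add: beta0)
    finally show ?thesis unfolding Bf_def A_def w_def by (simp add: algebra_simps)
  qed
  have NB: "N2 m w w = (\<Sum>k<d. (\<beta> k)^2)"
    unfolding N2_def w_def by (subst sumF) (auto simp: beta0 power2_eq_square)
  have Lev: "lam \<le> L" if nz: "\<exists>k<m. v k \<noteq> 0" and eq: "\<forall>a<m. (\<Sum>b<m. A a b * v b) = lam * v a" for lam v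
  proof -
    have CS: "Cov_sub D F = mat m m (\<lambda>(a, b). A a b)"
      unfolding Cov_sub_def Let_def es_def[symmetric] m_def[symmetric] A_def by simp
    have "eigenvector (Cov_sub D F) (vec m v) lam"
      unfolding eigenvector_def
    proof (intro conjI)
      show "vec m v \<in> carrier_vec (dim_row (Cov_sub D F))" by (simp add: CS)
      show "vec m v \<noteq> 0\<^sub>v (dim_row (Cov_sub D F))"
        using nz by (auto simp: CS vec_eq_iff)
      show "Cov_sub D F *\<^sub>v vec m v = lam \<cdot>\<^sub>v vec m v"
      proof (rule eq_vecI)
        fix a assume "a < dim_vec (lam \<cdot>\<^sub>v vec m v)"
        then have a: "a < m" by simp
        have "(Cov_sub D F *\<^sub>v vec m v) $ a = (\<Sum>b<m. A a b * v b)"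
          using a by (simp add: CS scalar_prod_def atLeast0LessThan row_def)
        then show "(Cov_sub D F *\<^sub>v vec m v) $ a = (lam \<cdot>\<^sub>v vec m v) $ a"
          using eq a by simp
      qed (simp add: CS)
    qed
    then have "eigenvalue (Cov_sub D F) lam" unfolding eigenvalue_def by blast
    then show ?thesis using eig Fd unfolding F_def by blast
  qed
  have Asym: "A a b = A b a" for a b unfolding A_def Cov_def by (simp add: mult.commute)
  have QL: "Q \<le> L * (\<Sum>k<d. (\<beta> k)^2)"
    unfolding QB NB[symmetric] by (rule rayleigh[OF Asym Lev]) auto
  have nb: "(\<Sum>k<d. (\<beta> k)^2) \<le> 4 / \<rho>"
  proof -
    have "(\<Sum>k<d. (\<beta> k)^2) = (norm2 d \<beta>)^2"
      unfolding norm2_def by (simp add: sum_nonneg)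
    also have "\<dots> \<le> (2 / sqrt \<rho>)^2"
    proof -
      have "0 \<le> norm2 d \<beta>" unfolding norm2_def by (simp add: sum_nonneg)
      then show ?thesis using power_mono[OF beta_norm, of 2] by simp
    qed
    also have "\<dots> = 4 / \<rho>" using rho_pos by (simp add: power_divide)
    finally show ?thesis .
  qed
  have L0: "L > 0" using rho_pos rho_L by linarith
  have Qb: "Q \<le> 4 * L / \<rho>"
  proof -
    have "L * (\<Sum>k<d. (\<beta> k)^2) \<le> L * (4 / \<rho>)" using mult_left_mono[OF nb, of L] L0 by simp
    also have "L * (4 / \<rho>) = 4 * L / \<rho>" by simp
    finally show ?thesis using QL by linarith
  qed
  have y2: "(\<integral>z. (snd z)^2 \<partial>D) \<le> 1"
  proof -
    have "(\<integral>z. (snd z)^2 \<partial>D) \<le> (\<integral>z. 1 \<partial>D)"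
    proof (intro integral_mono_AE int_y2)
      show "AE z in D. (snd z)^2 \<le> 1" using AEb
      proof eventually_elim
        case (elim z) then show ?case by (simp add: abs_square_le_1)
      qed
    qed auto
    then show ?thesis by (simp add: D.prob_space)
  qed
  have E2b: "E2 \<le> M^2 * (2 * (4 * L / \<rho>) + 2)"
  proof -
    have "E2 \<le> (\<integral>z. M^2 * (2 * (ip d \<beta> (fst z))^2 + 2 * (snd z)^2) \<partial>D)"
      unfolding E2_def
    proof (intro integral_mono_AE int_g2)
      show "integrable D (\<lambda>z. M^2 * (2 * (ip d \<beta> (fst z))^2 + 2 * (snd z)^2))"
        using int_ip2 int_y2 by auto
      show "AE z in D. (g z)^2 \<le> M^2 * (2 * (ip d \<beta> (fst z))^2 + 2 * (snd z)^2)"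
        using AEb
      proof eventually_elim
        case (elim z)
        have "\<bar>fst z i\<bar> \<le> M" using elim i_d by (auto intro: less_imp_le)
        then have "\<bar>fst z i\<bar>^2 \<le> M^2" by (intro power_mono) auto
        then have x2: "(fst z i)^2 \<le> M^2" by simp
        have r2: "(ip d \<beta> (fst z) - snd z)^2 \<le> 2 * (ip d \<beta> (fst z))^2 + 2 * (snd z)^2"
          by (rule sq_le2)
        have "(g z)^2 = (fst z i)^2 * (ip d \<beta> (fst z) - snd z)^2"
          unfolding g_def by (simp add: power_mult_distrib)
        also have "\<dots> \<le> M^2 * (2 * (ip d \<beta> (fst z))^2 + 2 * (snd z)^2)"
          using x2 r2 by (intro mult_mono) auto
        finally show ?case .
      qed
    qed
    also have "\<dots> = M^2 * (2 * Q + 2 * (\<integral>z. (snd z)^2 \<partial>D))"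
      using int_ip2 int_y2 ip2_eq by simp
    also have "\<dots> \<le> M^2 * (2 * (4 * L / \<rho>) + 2)"
      using Qb y2 by (intro mult_left_mono) auto
    finally show ?thesis .
  qed
  define P where "P = PiM {..<n} (\<lambda>_. D)"
  define G where "G = (\<lambda>j (\<omega> :: nat \<Rightarrow> (nat \<Rightarrow> real) \<times> real). g (\<omega> j))"
  have measG: "G j \<in> borel_measurable P" if "j < n" for j
    unfolding G_def P_def
    using measurable_compose[OF measurable_component_singleton[of j "{..<n}" "\<lambda>_. D"] meas_g] that by auto
  have intG2: "integrable P (\<lambda>\<omega>. (G j \<omega>)^2)" and intG2v: "(\<integral>\<omega>. (G j \<omega>)^2 \<partial>P) = E2" if "j < n" for j
  proof -
    have hm: "(\<lambda>z. (g z)^2) \<in> borel_measurable D" using meas_g by auto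
    show "integrable P (\<lambda>\<omega>. (G j \<omega>)^2)"
      using comp_PiM(1)[OF prob hm, of j "{..<n}"] int_g2 that unfolding P_def G_def by simp
    show "(\<integral>\<omega>. (G j \<omega>)^2 \<partial>P) = E2"
      using comp_PiM(2)[OF prob hm, of j "{..<n}"] that unfolding P_def G_def E2_def by simp
  qed
  have pt: "(a - b)^2 \<le> 2 * a^2 + 2 * b^2" for a b :: real
    by (rule sq_le2)
  have intT: "integrable P (\<lambda>\<omega>. (G j \<omega> - G l \<omega>)^2)" and
       intTb: "(\<integral>\<omega>. (G j \<omega> - G l \<omega>)^2 \<partial>P) \<le> 4 * E2" if "j < n" "l < n" for j l
  proof -
    have i2: "integrable P (\<lambda>\<omega>. 2 * (G j \<omega>)^2 + 2 * (G l \<omega>)^2)"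
      using intG2 that by auto
    show iT: "integrable P (\<lambda>\<omega>. (G j \<omega> - G l \<omega>)^2)"
    proof (rule Bochner_Integration.integrable_bound[OF i2])
      show "(\<lambda>\<omega>. (G j \<omega> - G l \<omega>)^2) \<in> borel_measurable P" using measG that by auto
      show "AE \<omega> in P. norm ((G j \<omega> - G l \<omega>)^2) \<le> norm (2 * (G j \<omega>)^2 + 2 * (G l \<omega>)^2)"
        using pt by (auto intro!: AE_I2)
    qed
    have "(\<integral>\<omega>. (G j \<omega> - G l \<omega>)^2 \<partial>P) \<le> (\<integral>\<omega>. 2 * (G j \<omega>)^2 + 2 * (G l \<omega>)^2 \<partial>P)"
      using iT i2 pt by (intro integral_mono) auto
    also have "\<dots> = 4 * E2" using intG2 intG2v that by simp
    finally show "(\<integral>\<omega>. (G j \<omega> - G l \<omega>)^2 \<partial>P) \<le> 4 * E2" .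
  qed
  have VG: "Vtilde n d i \<beta> \<omega> = 1 / (real n * (real n - 1)) * (\<Sum>j<n. \<Sum>l<j. (G j \<omega> - G l \<omega>)^2)" for \<omega>
    unfolding Vtilde_def Ustat_def G_def g_def by simp
  have "(\<integral>\<omega>. Vtilde n d i \<beta> \<omega> \<partial>P) = 1 / (real n * (real n - 1)) * (\<Sum>j<n. \<Sum>l<j. \<integral>\<omega>. (G j \<omega> - G l \<omega>)^2 \<partial>P)"
  proof -
    have iT: "integrable P (\<lambda>\<omega>. (G j \<omega> - G l \<omega>)^2)" if "j \<in> {..<n}" "l \<in> {..<j}" for j l
      using intT that by auto
    have s1: "(\<integral>\<omega>. (\<Sum>j<n. \<Sum>l<j. (G j \<omega> - G l \<omega>)^2) \<partial>P) = (\<Sum>j<n. \<integral>\<omega>. (\<Sum>l<j. (G j \<omega> - G l \<omega>)^2) \<partial>P)"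
      by (rule Bochner_Integration.integral_sum[where f="\<lambda>j \<omega>. \<Sum>l<j. (G j \<omega> - G l \<omega>)^2"])
         (use iT in \<open>auto intro!: integrable_sum\<close>)
    have s2: "(\<integral>\<omega>. (\<Sum>l<j. (G j \<omega> - G l \<omega>)^2) \<partial>P) = (\<Sum>l<j. \<integral>\<omega>. (G j \<omega> - G l \<omega>)^2 \<partial>P)" if jj: "j \<in> {..<n}" for j
      by (rule Bochner_Integration.integral_sum[where f="\<lambda>l \<omega>. (G j \<omega> - G l \<omega>)^2"])
         (use iT jj in auto)
    have "(\<integral>\<omega>. Vtilde n d i \<beta> \<omega> \<partial>P) = 1 / (real n * (real n - 1)) * (\<integral>\<omega>. (\<Sum>j<n. \<Sum>l<j. (G j \<omega> - G l \<omega>)^2) \<partial>P)"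
      unfolding VG by simp
    also have "\<dots> = 1 / (real n * (real n - 1)) * (\<Sum>j<n. \<Sum>l<j. \<integral>\<omega>. (G j \<omega> - G l \<omega>)^2 \<partial>P)"
      unfolding s1 using s2 by simp
    finally show ?thesis .
  qed
  also have "\<dots> \<le> 1 / (real n * (real n - 1)) * (\<Sum>j<n. \<Sum>l<j. 4 * E2)"
    using n2 intTb by (intro mult_left_mono sum_mono) auto
  also have "\<dots> = 1 / (real n * (real n - 1)) * (4 * E2 * (real n * (real n - 1) / 2))"
  proof -
    have "(\<Sum>j<n. \<Sum>l<j. 4 * E2) = (\<Sum>j<n. 4 * E2 * real j)" by (simp add: mult.commute)
    also have "\<dots> = 4 * E2 * (\<Sum>j<n. real j)" by (simp add: sum_distrib_left)
    also have "\<dots> = 4 * E2 * (real n * (real n - 1) / 2)" by (simp add: sum_nat_real)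
    finally show ?thesis by simp
  qed
  also have "\<dots> = 2 * E2" using n2 by (simp add: field_simps)
  also have "\<dots> \<le> 2 * (M^2 * (2 * (4 * L / \<rho>) + 2))" using E2b by simp
  also have "\<dots> \<le> 20 * L * M\<^sup>2 / \<rho>"
  proof -
    have "1 \<le> L / \<rho>" using rho_pos rho_L by simp
    then have "2 * (4 * L / \<rho>) + 2 \<le> 10 * (L / \<rho>)" by simp
    then have "2 * (M^2 * (2 * (4 * L / \<rho>) + 2)) \<le> 2 * (M^2 * (10 * (L / \<rho>)))"
      by (intro mult_left_mono) auto
    then show ?thesis by (simp add: field_simps)
  qed
  finally show ?thesis unfolding P_def .
qed

end
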